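(* Let $\lambda\ge0$. If a solution $(\xi,L_1,L_2,L_3,R_1,R_2,R_3)$ of the system $(S_\lambda)$ is defined on $[T,S)$ with $S<\infty$ and cannot be extended past $S$, then $\lim_{r\to S}\xi(r)=-\infty$.
   Context: The system $(S_\lambda)$ is: $\xi'=-L_1^2-L_2^2-L_3^2-\lambda$, $L_i'=-\xi L_i+\frac{R_i^2}{2}-\frac{(R_j-R_k)^2}{2}-\lambda$, $R_i'=R_i(L_i-L_j-L_k)$ for $i=1,2,3$, $\{i,j,k\}=\{1,2,3\}$, where $'$ denotes $d/dr$. *)

theory Defs
  imports "HOL-Analysis.Analysis"
begin

text \<open>Solution of the system (S_lambda) on an interval I (one-sided derivatives at
endpoints belonging to I, via derivatives within I).\<close>
definition sol_on ::
  "real \<Rightarrow> real set \<Rightarrow> (real \<Rightarrow> real) \<Rightarrow> (real \<Rightarrow> real) \<Rightarrow> (real \<Rightarrow> real) \<Rightarrow> (real \<Rightarrow> real)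
   \<Rightarrow> (real \<Rightarrow> real) \<Rightarrow> (real \<Rightarrow> real) \<Rightarrow> (real \<Rightarrow> real) \<Rightarrow> bool" where
  "sol_on lam I xi L1 L2 L3 R1 R2 R3 \<longleftrightarrow>
    (\<forall>r\<in>I.
      (xi has_real_derivative (- ((L1 r)^2) - (L2 r)^2 - (L3 r)^2 - lam)) (at r within I) \<and>
      (L1 has_real_derivative (- xi r * L1 r + (R1 r)^2 / 2 - (R2 r - R3 r)^2 / 2 - lam)) (at r within I) \<and>
      (L2 has_real_derivative (- xi r * L2 r + (R2 r)^2 / 2 - (R3 r - R1 r)^2 / 2 - lam)) (at r within I) \<and>
      (L3 has_real_derivative (- xi r * L3 r + (R3 r)^2 / 2 - (R1 r - R2 r)^2 / 2 - lam)) (at r within I) \<and>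
      (R1 has_real_derivative (R1 r * (L1 r - L2 r - L3 r))) (at r within I) \<and>
      (R2 has_real_derivative (R2 r * (L2 r - L3 r - L1 r))) (at r within I) \<and>
      (R3 has_real_derivative (R3 r * (L3 r - L1 r - L2 r))) (at r within I))"

definition extendable_past ::
  "real \<Rightarrow> real \<Rightarrow> real \<Rightarrow> (real \<Rightarrow> real) \<Rightarrow> (real \<Rightarrow> real) \<Rightarrow> (real \<Rightarrow> real) \<Rightarrow> (real \<Rightarrow> real)
   \<Rightarrow> (real \<Rightarrow> real) \<Rightarrow> (real \<Rightarrow> real) \<Rightarrow> (real \<Rightarrow> real) \<Rightarrow> bool" where
  "extendable_past lam T S xi L1 L2 L3 R1 R2 R3 \<longleftrightarrow>
    (\<exists>S' > S. \<exists>xi' L1' L2' L3' R1' R2' R3'.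
       sol_on lam {T..<S'} xi' L1' L2' L3' R1' R2' R3' \<and>
       (\<forall>r\<in>{T..<S}. xi' r = xi r \<and> L1' r = L1 r \<and> L2' r = L2 r \<and> L3' r = L3 r \<and>
                      R1' r = R1 r \<and> R2' r = R2 r \<and> R3' r = R3 r))"

end

theory Submission
  imports Defs
begin

lemma deriv_interior:
  fixes f :: "real \<Rightarrow> real"
  assumes "(f has_real_derivative D) (at t within {T..<S})" "T < t" "t < S"
  shows "(f has_real_derivative D) (at t)"
proof -
  have "at t within {T..<S} = at t" using assms by (intro at_within_interior) auto
  then show ?thesis using assms(1) by simp
qed

lemma antitone_deriv:
  fixes f f' :: "real \<Rightarrow> real"
  assumes d: "\<And>t. t \<in> {T..<S} \<Longrightarrow> (f has_real_derivative f' t) (at t within {T..<S})"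
    and n: "\<And>t. t \<in> {T..<S} \<Longrightarrow> f' t \<le> 0"
    and "T \<le> a" "a \<le> b" "b < S"
  shows "f b \<le> f a"
proof (rule DERIV_nonpos_imp_decreasing_open[OF \<open>a \<le> b\<close>])
  fix x assume "a < x" "x < b"
  then show "\<exists>y. (f has_real_derivative y) (at x) \<and> y \<le> 0"
    using assms by (intro exI[of _ "f' x"]) (auto intro: deriv_interior[OF d])
next
  have "continuous_on {T..<S} f"
    unfolding continuous_on_eq_continuous_within using DERIV_continuous[OF d] by blast
  then show "continuous_on {a..b} f" by (rule continuous_on_subset) (use assms in auto)
qed

lemma limit_bounded_deriv:
  fixes f f' :: "real \<Rightarrow> real"
  assumes d: "\<And>t. t \<in> {T..<S} \<Longrightarrow> (f has_real_derivative f' t) (at t within {T..<S})"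
    and bd: "\<And>t. t \<in> {T..<S} \<Longrightarrow> \<bar>f' t\<bar> \<le> M" and TS: "T < S"
  shows "\<exists>l. (f \<longlongrightarrow> l) (at_left S)"
proof -
  have fb: "-M \<le> f' t \<and> f' t \<le> M" if "t\<in>{T..<S}" for t using bd[OF that] by (simp add: abs_le_iff)
  have fb1: "- (f' t + M) \<le> 0" "f' t - M \<le> 0" if "t\<in>{T..<S}" for t using fb[OF that] by auto
  define g where "g t = - (f t + M * t)" for t
  have gd: "(g has_real_derivative (- (f' t + M))) (at t within {T..<S})" if "t \<in> {T..<S}" for t
    unfolding g_def using d[OF that] by (auto intro!: derivative_eq_intros)
  have gmono: "g b \<le> g a" if "T \<le> a" "a \<le> b" "b < S" for a b
  proof (rule antitone_deriv[where f'="\<lambda>t. -(f' t + M)", OF gd _ that])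
    fix t :: real assume "t \<in> {T..<S}" then show "-(f' t + M) \<le> 0" using fb1 by blast
  qed
  define h where "h t = f t - M * t" for t
  have hd: "(h has_real_derivative (f' t - M)) (at t within {T..<S})" if "t \<in> {T..<S}" for t
    unfolding h_def using d[OF that] by (auto intro!: derivative_eq_intros)
  have hmono: "h b \<le> h a" if "T \<le> a" "a \<le> b" "b < S" for a b
  proof (rule antitone_deriv[where f'="\<lambda>t. f' t - M", OF hd _ that])
    fix t :: real assume "t \<in> {T..<S}" then show "f' t - M \<le> 0" using fb1 by blast
  qed
  define G where "G t = f t + M * t" for t
  have Gb: "G t \<le> f T - M * T + 2 * M * S" if "t \<in> {T..<S}" for t
  proof -
    have "h t \<le> h T" using hmono[of T t] that by auto
    moreover have "M \<ge> 0" using bd[of T] TS by auto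
    moreover have "M * t \<le> M * S" using that \<open>M \<ge> 0\<close> by (intro mult_left_mono) auto
    ultimately show ?thesis using that unfolding h_def G_def by linarith
  qed
  have Gm: "G a \<le> G b" if "T \<le> a" "a \<le> b" "b < S" for a b
    using gmono[OF that] unfolding g_def G_def by simp
  define l where "l = Sup (G ` {T..<S})"
  have bdd: "bdd_above (G ` {T..<S})" by (rule bdd_aboveI2[where M="f T - M * T + 2 * M * S"]) (use Gb in auto)
  have "(G \<longlongrightarrow> l) (at_left S)"
  proof (rule increasing_tendsto)
    show "\<forall>\<^sub>F n in at_left S. G n \<le> l"
      using eventually_at_left_real[OF TS]
      by eventually_elim (auto simp: l_def intro!: cSUP_upper bdd)
    fix x assume "x < l"
    then obtain t where t: "t \<in> {T..<S}" "x < G t"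
      unfolding l_def using less_cSUP_iff[OF _ bdd] TS by force
    show "\<forall>\<^sub>F n in at_left S. x < G n"
      using eventually_at_left_real[of t S] t
      by (auto elim!: eventually_mono intro: less_le_trans[OF _ Gm])
  qed
  then have "((\<lambda>t. G t - M * t) \<longlongrightarrow> l - M * S) (at_left S)"
    by (intro tendsto_intros) (auto intro!: tendsto_ident_at)
  then show ?thesis unfolding G_def by auto
qed

lemma left_deriv_limit:
  fixes f f' g :: "real \<Rightarrow> real"
  assumes d: "\<And>t. t \<in> {T..<S} \<Longrightarrow> (f has_real_derivative f' t) (at t within {T..<S})"
    and TS: "T < S" and fl: "(f \<longlongrightarrow> a) (at_left S)" and f'l: "(f' \<longlongrightarrow> D) (at_left S)"
    and g: "\<And>t. t < S \<Longrightarrow> g t = f t" "g S = a"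
  shows "(g has_real_derivative D) (at S within {T..S})"
proof -
  have "at S within {T..S} = at S within {..<S}"
    by (rule at_within_nhd[of _ "{T<..}"]) (use TS in auto)
  have ev: "\<forall>\<^sub>F t in at_left S. t \<in> {T<..<S}" using eventually_at_left_real[OF TS] .
  have "((\<lambda>t. (f t - a) / (t - S)) \<longlongrightarrow> D) (at_left S)"
  proof (rule lhopital_left[where f' = f' and g' = "\<lambda>_. 1"])
    show "((\<lambda>t. f t - a) \<longlongrightarrow> 0) (at_left S)" using fl by (simp add: LIM_zero)
    show "((\<lambda>t. t - S) \<longlongrightarrow> 0) (at_left S)" by (intro tendsto_eq_intros) (auto intro: tendsto_ident_at)
    show "\<forall>\<^sub>F t in at_left S. t - S \<noteq> 0" using ev by eventually_elim auto
    show "\<forall>\<^sub>F t in at_left S. (1::real) \<noteq> 0" by simp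
    show "\<forall>\<^sub>F t in at_left S. ((\<lambda>t. f t - a) has_real_derivative f' t) (at t)"
      using ev by eventually_elim (auto intro!: derivative_eq_intros deriv_interior[OF d])
    show "\<forall>\<^sub>F t in at_left S. ((\<lambda>t. t - S) has_real_derivative 1) (at t)"
      by (intro always_eventually allI) (auto intro!: derivative_eq_intros)
    show "((\<lambda>t. f' t / 1) \<longlongrightarrow> D) (at_left S)" using f'l by simp
  qed
  then have "((\<lambda>t. (g t - g S) / (t - S)) \<longlongrightarrow> D) (at_left S)"
    by (rule Lim_transform_eventually) (use ev in \<open>auto elim!: eventually_mono simp: g\<close>)
  then show ?thesis
    unfolding has_field_derivative_iff \<open>at S within {T..S} = at S within {..<S}\<close> .
qed

lemma glue_deriv:
  fixes f f' z z' :: "real \<Rightarrow> real"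
  assumes d: "\<And>t. t \<in> {T..<S} \<Longrightarrow> (f has_real_derivative f' t) (at t within {T..<S})"
    and dz: "\<And>t. t \<in> {S..S+e} \<Longrightarrow> (z has_real_derivative z' t) (at t within {S..S+e})"
    and TS: "T < S" and e: "0 < e"
    and fl: "(f \<longlongrightarrow> z S) (at_left S)" and f'l: "(f' \<longlongrightarrow> z' S) (at_left S)"
    and t: "t \<in> {T..<S+e}"
  shows "((\<lambda>t. if t < S then f t else z t) has_real_derivative (if t < S then f' t else z' t)) (at t within {T..<S+e})"
proof -
  let ?g = "\<lambda>t. if t < S then f t else z t"
  consider "t < S" | "t = S" | "S < t" by linarith
  then show ?thesis
  proof cases
    case 1
    have "at t within {T..<S+e} = at t within {T..<S}"
      by (rule at_within_nhd[of _ "{..<S}"]) (use 1 e in auto)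
    moreover have "(?g has_real_derivative f' t) (at t within {T..<S})"
      by (rule has_field_derivative_transform_within[OF d, where d = "S - t"]) (use 1 t in \<open>auto simp: dist_real_def\<close>)
    ultimately show ?thesis using 1 by simp
  next
    case 3
    have "at t within {T..<S+e} = at t within {S..S+e}"
      by (rule at_within_nhd[of _ "{S<..<S+e}"]) (use 3 t TS in auto)
    moreover have "(?g has_real_derivative z' t) (at t within {S..S+e})"
      by (rule has_field_derivative_transform_within[OF dz, where d = "t - S"]) (use 3 t in \<open>auto simp: dist_real_def\<close>)
    ultimately show ?thesis using 3 by simp
  next
    case 2
    have L: "(?g has_real_derivative z' S) (at S within {T..S})"
      by (rule left_deriv_limit[OF d TS fl f'l]) auto
    have "(z has_real_derivative z' S) (at S within {S..<S+e})"
      by (rule has_field_derivative_subset[OF dz]) (use e in auto)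
    then have R: "(?g has_real_derivative z' S) (at S within {S..<S+e})"
      by (rule has_field_derivative_transform_within[where d = "1"]) (use e in auto)
    have "{T..<S+e} = {T..S} \<union> {S..<S+e}" using TS e by auto
    then show ?thesis using L R 2 unfolding has_field_derivative_iff by (simp add: Lim_within_Un)
  qed
qed

lemma ode_exists:
  fixes F :: "'a::banach \<Rightarrow> 'a" and y0 :: 'a and a r K :: real
  assumes Fc: "continuous_on UNIV F" and r: "r > 0" and K: "K \<ge> 0"
    and lip: "\<And>u v. u \<in> cball y0 r \<Longrightarrow> v \<in> cball y0 r \<Longrightarrow> norm (F u - F v) \<le> K * norm (u - v)"
  shows "\<exists>e>0. \<exists>y. y a = y0 \<and> (\<forall>t\<in>{a..a+e}. (y has_vector_derivative F (y t)) (at t within {a..a+e}))"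
proof -
  define M where "M = norm (F y0) + K * r"
  have M: "norm (F u) \<le> M" if "u \<in> cball y0 r" for u
  proof -
    have "norm (F u - F y0) \<le> K * norm (u - y0)" using lip[OF that] r by simp
    also have "\<dots> \<le> K * r" using that K by (intro mult_left_mono) (auto simp: dist_norm norm_minus_commute)
    finally show ?thesis unfolding M_def using norm_triangle_ineq2[of "F u" "F y0"] by linarith
  qed
  have M0: "M \<ge> 0" unfolding M_def using K r by simp
  define e where "e = min (r / (M + 1)) (1 / (2 * K + 2))"
  have e0: "e > 0" unfolding e_def using M0 r K by simp
  have eM: "e * M \<le> r"
  proof -
    have "e * M \<le> r / (M + 1) * M" unfolding e_def using M0 by (intro mult_right_mono) auto
    also have "\<dots> \<le> r" using M0 r by (simp add: field_simps)
    finally show ?thesis .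
  qed
  have eK: "e * K \<le> 1/2"
  proof -
    have "e * K \<le> 1 / (2 * K + 2) * K" unfolding e_def using K by (intro mult_right_mono) auto
    also have "\<dots> \<le> 1/2" using K by (simp add: field_simps)
    finally show ?thesis .
  qed
  define b where "b = a + e"
  have ab: "a < b" using e0 b_def by simp
  define cl where "cl = (\<lambda>t::real. max a (min t b))"
  have cl_in: "cl t \<in> {a..b}" for t using ab unfolding cl_def by auto
  have cl_cont: "continuous_on UNIV cl" unfolding cl_def by (intro continuous_intros)
  have cl_id: "t \<in> {a..b} \<Longrightarrow> cl t = t" for t unfolding cl_def by auto
  define X :: "(real \<Rightarrow>\<^sub>C 'a) set" where "X = PiC UNIV (\<lambda>_. cball y0 r)"
  have X_iff: "f \<in> X \<longleftrightarrow> (\<forall>t. apply_bcontfun f t \<in> cball y0 r)" for f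
    unfolding X_def mem_PiC_iff by auto
  define Pf where "Pf = (\<lambda>f::real \<Rightarrow>\<^sub>C 'a. \<lambda>t. y0 + integral {a..cl t} (\<lambda>s. F (apply_bcontfun f s)))"
  have gcont: "continuous_on S (\<lambda>s. F (apply_bcontfun f s))" for f :: "real \<Rightarrow>\<^sub>C 'a" and S
    by (rule continuous_on_compose2[OF Fc]) auto
  have intb: "norm (integral {a..c} (\<lambda>s. F (apply_bcontfun f s))) \<le> M * (c - a)"
    if "f \<in> X" "c \<in> {a..b}" for f :: "real \<Rightarrow>\<^sub>C 'a" and c
    using that by (intro integral_bound) (auto intro!: gcont M simp: X_iff)
  have Pf_ball: "Pf f t \<in> cball y0 r" if "f \<in> X" for f t
  proof -
    have "norm (integral {a..cl t} (\<lambda>s. F (apply_bcontfun f s))) \<le> M * (cl t - a)"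
      using intb[OF that cl_in] .
    also have "\<dots> \<le> M * e" using cl_in[of t] M0 unfolding b_def by (intro mult_left_mono) auto
    finally show ?thesis using eM unfolding Pf_def by (simp add: dist_norm mult.commute)
  qed
  have Pf_cont: "continuous_on UNIV (Pf f)" for f
  proof -
    have "continuous_on {a..b} (\<lambda>x. integral {a..x} (\<lambda>s. F (apply_bcontfun f s)))"
      by (intro indefinite_integral_continuous_1 integrable_continuous_real gcont)
    then have "continuous_on UNIV (\<lambda>t. integral {a..cl t} (\<lambda>s. F (apply_bcontfun f s)))"
      using cl_in by (intro continuous_on_compose2[OF _ cl_cont]) auto
    then show ?thesis unfolding Pf_def by (intro continuous_intros)
  qed
  have Pf_bc: "Pf f \<in> bcontfun" if "f \<in> X" for f
  proof (rule bcontfun_normI[OF Pf_cont])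
    fix t show "norm (Pf f t) \<le> norm y0 + r"
      using Pf_ball[OF that, of t] norm_triangle_ineq2[of "Pf f t" y0]
      by (auto simp: dist_norm norm_minus_commute)
  qed
  define P where "P = (\<lambda>f. Bcontfun (Pf f))"
  have P_app: "apply_bcontfun (P f) = Pf f" if "f \<in> X" for f
    unfolding P_def using Pf_bc[OF that] by (simp add: Bcontfun_inverse)
  have PX: "P ` X \<subseteq> X" using Pf_ball P_app by (auto simp: X_iff)
  have Pc: "dist (P f) (P g) \<le> 1/2 * dist f g" if "f \<in> X" "g \<in> X" for f g
  proof (rule dist_bound)
    fix t
    have "dist (apply_bcontfun (P f) t) (apply_bcontfun (P g) t)
        = norm (integral {a..cl t} (\<lambda>s. F (apply_bcontfun f s) - F (apply_bcontfun g s)))"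
      using that cl_in[of t]
      by (simp add: P_app Pf_def dist_norm integral_diff integrable_continuous_real gcont)
    also have "\<dots> \<le> (K * dist f g) * (cl t - a)"
    proof (rule integral_bound)
      show "a \<le> cl t" using cl_in[of t] by auto
      show "continuous_on {a..cl t} (\<lambda>s. F (apply_bcontfun f s) - F (apply_bcontfun g s))"
        by (intro continuous_intros gcont)
      fix s
      have "norm (F (apply_bcontfun f s) - F (apply_bcontfun g s)) \<le> K * norm (apply_bcontfun f s - apply_bcontfun g s)"
        using that by (intro lip) (auto simp: X_iff)
      also have "\<dots> \<le> K * dist f g" using K dist_bounded[of f s g] by (intro mult_left_mono) (auto simp: dist_norm)
      finally show "norm (F (apply_bcontfun f s) - F (apply_bcontfun g s)) \<le> K * dist f g" .
    qed
    also have "\<dots> \<le> (K * dist f g) * e" using cl_in[of t] K unfolding b_def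
      by (intro mult_left_mono) auto
    also have "\<dots> \<le> 1/2 * dist f g" using eK
      by (metis mult.commute mult.left_commute mult_right_mono zero_le_dist)
    finally show "dist (apply_bcontfun (P f) t) (apply_bcontfun (P g) t) \<le> 1/2 * dist f g" .
  qed
  have Xc: "complete X" unfolding X_def complete_eq_closed by (intro closed_PiC) auto
  have Xne: "X \<noteq> {}"
  proof -
    have "const_bcontfun y0 \<in> X" using r by (simp add: X_iff)
    then show ?thesis by auto
  qed
  obtain f where f: "f \<in> X" "P f = f" using Banach_fix[OF Xc Xne _ _ PX Pc] by auto
  define y where "y = apply_bcontfun f"
  have yeq: "y t = y0 + integral {a..t} (\<lambda>s. F (y s))" if "t \<in> {a..b}" for t
    using f that by (metis P_app Pf_def y_def cl_id)
  show ?thesis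
  proof (intro exI conjI ballI)
    show "e > 0" by (rule e0)
    show "y a = y0" using yeq[of a] ab by simp
    fix t assume t: "t \<in> {a..a+e}"
    have "((\<lambda>t. y0 + integral {a..t} (\<lambda>s. F (y s))) has_vector_derivative F (y t)) (at t within {a..b})"
    proof -
      have "((\<lambda>u. integral {a..u} (\<lambda>s. F (y s))) has_vector_derivative F (y t)) (at t within {a..b})"
        using t unfolding b_def y_def by (intro integral_has_vector_derivative gcont) auto
      then show ?thesis by (intro derivative_eq_intros) auto
    qed
    then show "(y has_vector_derivative F (y t)) (at t within {a..a+e})"
      unfolding b_def by (rule has_vector_derivative_transform[rotated 2]) (use t in \<open>auto simp: yeq b_def\<close>)
  qed
qed

lemma R_bound:
  fixes R p xi xd :: "real \<Rightarrow> real"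
  assumes dR: "\<And>t. t \<in> {T..<S} \<Longrightarrow> (R has_real_derivative R t * p t) (at t within {T..<S})"
    and dxi: "\<And>t. t \<in> {T..<S} \<Longrightarrow> (xi has_real_derivative xd t) (at t within {T..<S})"
    and xd: "\<And>t. t \<in> {T..<S} \<Longrightarrow> 3 * xd t \<le> - ((p t)^2)"
    and lb: "\<And>t. t \<in> {T..<S} \<Longrightarrow> Z \<le> xi t"
  shows "\<exists>C. \<forall>t\<in>{T..<S}. \<bar>R t\<bar> \<le> C"
proof -
  define g where "g t = (R t)^2 * exp (3 * xi t - t)" for t
  define gd where "gd t = (R t)^2 * exp (3 * xi t - t) * (2 * p t + 3 * xd t - 1)" for t
  have dg: "(g has_real_derivative gd t) (at t within {T..<S})" if "t \<in> {T..<S}" for t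
  proof -
    have "(g has_real_derivative (2 * R t * (R t * p t) * exp (3 * xi t - t) + (R t)^2 * (exp (3 * xi t - t) * (3 * xd t - 1)))) (at t within {T..<S})"
      unfolding g_def
      by (rule derivative_eq_intros dR[OF that] dxi[OF that] refl | simp)+
    moreover have "2 * R t * (R t * p t) * exp (3 * xi t - t) + (R t)^2 * (exp (3 * xi t - t) * (3 * xd t - 1)) = gd t"
      unfolding gd_def by (simp add: algebra_simps power2_eq_square)
    ultimately show ?thesis by simp
  qed
  have gdn: "gd t \<le> 0" if "t \<in> {T..<S}" for t
  proof -
    have "2 * p t + 3 * xd t - 1 \<le> 2 * p t - ((p t)^2) - 1" using xd[OF that] by linarith
    also have "\<dots> = - ((p t - 1)^2)" by (simp add: power2_eq_square algebra_simps)
    also have "\<dots> \<le> 0" by simp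
    finally have "2 * p t + 3 * xd t - 1 \<le> 0" .
    moreover have "(R t)^2 * exp (3 * xi t - t) \<ge> 0" by simp
    ultimately show ?thesis unfolding gd_def by (simp add: mult_nonneg_nonpos)
  qed
  show ?thesis
  proof (cases "T < S")
    case False then show ?thesis by auto
  next
    case True
    define C where "C = sqrt (g T * exp (S - 3 * Z))"
    show ?thesis
    proof (intro exI ballI)
      fix t assume t: "t \<in> {T..<S}"
      have "g t \<le> g T" using antitone_deriv[OF dg gdn, of T t] t by auto
      then have "(R t)^2 \<le> g T * exp (t - 3 * xi t)"
        unfolding g_def by (simp add: exp_diff field_simps)
      also have "\<dots> \<le> g T * exp (S - 3 * Z)"
        using t lb[OF t] by (intro mult_left_mono) (auto simp: g_def)
      finally have "\<bar>R t\<bar>^2 \<le> g T * exp (S - 3 * Z)" by simp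
      then show "\<bar>R t\<bar> \<le> C" unfolding C_def by (rule real_le_rsqrt)
    qed
  qed
qed

lemma L_bound:
  fixes L Ld xi q :: "real \<Rightarrow> real"
  assumes dL: "\<And>t. t \<in> {T..<S} \<Longrightarrow> (L has_real_derivative Ld t) (at t within {T..<S})"
    and Ld: "\<And>t. t \<in> {T..<S} \<Longrightarrow> Ld t = - xi t * L t + q t"
    and xb: "\<And>t. t \<in> {T..<S} \<Longrightarrow> \<bar>xi t\<bar> \<le> X"
    and qb: "\<And>t. t \<in> {T..<S} \<Longrightarrow> \<bar>q t\<bar> \<le> Q"
    and X: "X \<ge> 0"
  shows "\<exists>C. \<forall>t\<in>{T..<S}. \<bar>L t\<bar> \<le> C"
proof -
  define A where "A = 2 * X + 1"
  have A: "A \<ge> 1" using X by (simp add: A_def)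
  define h where "h t = ((L t)^2 + Q^2) * exp (- A * t)" for t
  define hd where "hd t = exp (- A * t) * (2 * L t * Ld t - A * ((L t)^2 + Q^2))" for t
  have dh: "(h has_real_derivative hd t) (at t within {T..<S})" if "t \<in> {T..<S}" for t
  proof -
    have "(h has_real_derivative (2 * L t * Ld t * exp (- A * t) + ((L t)^2 + Q^2) * (exp (- A * t) * (- A)))) (at t within {T..<S})"
      unfolding h_def
      by (rule derivative_eq_intros dL[OF that] refl | simp)+
    moreover have "2 * L t * Ld t * exp (- A * t) + ((L t)^2 + Q^2) * (exp (- A * t) * (- A)) = hd t"
      unfolding hd_def by (simp add: algebra_simps)
    ultimately show ?thesis by simp
  qed
  have hdn: "hd t \<le> 0" if t: "t \<in> {T..<S}" for t
  proof -
    have a: "- xi t * (L t)^2 \<le> X * (L t)^2" using xb[OF t] by (intro mult_right_mono) auto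
    have b: "2 * L t * q t \<le> (L t)^2 + (q t)^2"
      using zero_le_power2[of "L t - q t"] by (simp add: power2_eq_square algebra_simps)
    have c: "(q t)^2 \<le> Q^2" using qb[OF t] by (metis abs_le_square_iff abs_of_nonneg abs_ge_zero order_trans power2_abs) 
    have d: "Q^2 \<le> A * Q^2" using A by (simp add: mult_le_cancel_right1)
    have "2 * L t * Ld t = 2 * (- xi t * (L t)^2) + 2 * L t * q t"
      unfolding Ld[OF t] by (simp add: power2_eq_square algebra_simps)
    then have "2 * L t * Ld t - A * ((L t)^2 + Q^2) \<le> 0"
      using a b c d unfolding A_def by (simp add: algebra_simps)
    then show ?thesis unfolding hd_def by (simp add: mult_nonneg_nonpos)
  qed
  show ?thesis
  proof (cases "T < S")
    case False then show ?thesis by auto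
  next
    case True
    define C where "C = sqrt (h T * exp (A * S))"
    show ?thesis
    proof (intro exI ballI)
      fix t assume t: "t \<in> {T..<S}"
      have "h t \<le> h T" using antitone_deriv[OF dh hdn, of T t] t by auto
      then have "(L t)^2 + Q^2 \<le> h T * exp (A * t)"
        unfolding h_def by (simp add: exp_minus field_simps)
      also have "\<dots> \<le> h T * exp (A * S)"
        using t A by (intro mult_left_mono) (auto simp: h_def)
      finally have "(L t)^2 \<le> h T * exp (A * S)" using zero_le_power2[of Q] by linarith
      then have "\<bar>L t\<bar>^2 \<le> h T * exp (A * S)" by simp
      then show "\<bar>L t\<bar> \<le> C" unfolding C_def by (rule real_le_rsqrt)
    qed
  qed
qed

lemma sq3: "(x - y - z)^2 \<le> 3 * (x^2 + y^2 + z^2)" for x y z :: real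
proof -
  have "3 * (x^2 + y^2 + z^2) - (x - y - z)^2 = (x + y)^2 + (x + z)^2 + (y - z)^2"
    by (simp add: power2_eq_square algebra_simps)
  then show ?thesis by (smt (verit) zero_le_power2)
qed

lemma qbound:
  fixes a b c C lam :: real
  assumes "\<bar>a\<bar> \<le> C" "\<bar>b\<bar> \<le> C" "\<bar>c\<bar> \<le> C" "lam \<ge> 0"
  shows "\<bar>a^2/2 - (b - c)^2/2 - lam\<bar> \<le> 3 * C^2 + lam"
proof -
  have C: "C \<ge> 0" using assms(1) by linarith
  have "a^2 \<le> C^2" using assms(1) C by (metis abs_le_square_iff abs_of_nonneg)
  moreover have "\<bar>b - c\<bar> \<le> 2 * C" using assms(2,3) by linarith
  then have "(b - c)^2 \<le> (2 * C)^2" using C by (metis abs_le_square_iff abs_of_nonneg mult_nonneg_nonneg zero_le_numeral)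
  moreover have "0 \<le> a^2" "0 \<le> (b-c)^2" by simp_all
  moreover have "(2 * C)^2 = 4 * C^2" by (simp add: power_mult_distrib)
  ultimately show ?thesis using assms(4) unfolding abs_le_iff by linarith
qed

type_synonym st = "real \<times> real \<times> real \<times> real \<times> real \<times> real \<times> real"

definition c1 :: "st \<Rightarrow> real" where "c1 u = fst u"
definition c2 :: "st \<Rightarrow> real" where "c2 u = fst (snd u)"
definition c3 :: "st \<Rightarrow> real" where "c3 u = fst (snd (snd u))"
definition c4 :: "st \<Rightarrow> real" where "c4 u = fst (snd (snd (snd u)))"
definition c5 :: "st \<Rightarrow> real" where "c5 u = fst (snd (snd (snd (snd u))))"
definition c6 :: "st \<Rightarrow> real" where "c6 u = fst (snd (snd (snd (snd (snd u)))))"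
definition c7 :: "st \<Rightarrow> real" where "c7 u = snd (snd (snd (snd (snd (snd u)))))"
lemmas cs_def = c1_def c2_def c3_def c4_def c5_def c6_def c7_def

definition Fs :: "real \<Rightarrow> st \<Rightarrow> st" where
  "Fs lam u = (- ((c2 u)^2) - (c3 u)^2 - (c4 u)^2 - lam,
           - c1 u * c2 u + (c5 u)^2/2 - (c6 u - c7 u)^2/2 - lam,
           - c1 u * c3 u + (c6 u)^2/2 - (c7 u - c5 u)^2/2 - lam,
           - c1 u * c4 u + (c7 u)^2/2 - (c5 u - c6 u)^2/2 - lam,
           c5 u * (c2 u - c3 u - c4 u),
           c6 u * (c3 u - c4 u - c2 u),
           c7 u * (c4 u - c2 u - c3 u))"

lemma Fs_cs:
  "c1 (Fs lam u) = - ((c2 u)^2) - (c3 u)^2 - (c4 u)^2 - lam"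
  "c2 (Fs lam u) = - c1 u * c2 u + (c5 u)^2/2 - (c6 u - c7 u)^2/2 - lam"
  "c3 (Fs lam u) = - c1 u * c3 u + (c6 u)^2/2 - (c7 u - c5 u)^2/2 - lam"
  "c4 (Fs lam u) = - c1 u * c4 u + (c7 u)^2/2 - (c5 u - c6 u)^2/2 - lam"
  "c5 (Fs lam u) = c5 u * (c2 u - c3 u - c4 u)"
  "c6 (Fs lam u) = c6 u * (c3 u - c4 u - c2 u)"
  "c7 (Fs lam u) = c7 u * (c4 u - c2 u - c3 u)"
  unfolding Fs_def by (simp_all only: c1_def[of "(_,_)"] c2_def[of "(_,_)"] c3_def[of "(_,_)"] c4_def[of "(_,_)"]
     c5_def[of "(_,_)"] c6_def[of "(_,_)"] c7_def[of "(_,_)"] fst_conv snd_conv)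

lemma norm_fst_le': "norm (fst u) \<le> norm u" by (cases u) (simp add: norm_fst_le)
lemma norm_snd_le': "norm (snd u) \<le> norm u" by (cases u) (simp add: norm_snd_le)

lemma cs_le: "\<bar>c1 u\<bar> \<le> norm u" "\<bar>c2 u\<bar> \<le> norm u" "\<bar>c3 u\<bar> \<le> norm u" "\<bar>c4 u\<bar> \<le> norm u"
  "\<bar>c5 u\<bar> \<le> norm u" "\<bar>c6 u\<bar> \<le> norm u" "\<bar>c7 u\<bar> \<le> norm u"
proof -
  have n: "norm (snd u) \<le> norm u" "norm (snd (snd u)) \<le> norm u" "norm (snd (snd (snd u))) \<le> norm u"
    "norm (snd (snd (snd (snd u)))) \<le> norm u" "norm (snd (snd (snd (snd (snd u))))) \<le> norm u"
    "norm (snd (snd (snd (snd (snd (snd u)))))) \<le> norm u"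
    using norm_snd_le'[of u] norm_snd_le'[of "snd u"] norm_snd_le'[of "snd (snd u)"]
      norm_snd_le'[of "snd (snd (snd u))"] norm_snd_le'[of "snd (snd (snd (snd u)))"]
      norm_snd_le'[of "snd (snd (snd (snd (snd u))))"] by linarith+
  show "\<bar>c1 u\<bar> \<le> norm u" using norm_fst_le'[of u] by (simp add: c1_def)
  show "\<bar>c2 u\<bar> \<le> norm u" using norm_fst_le'[of "snd u"] n by (simp add: c2_def)
  show "\<bar>c3 u\<bar> \<le> norm u" using norm_fst_le'[of "snd (snd u)"] n by (simp add: c3_def)
  show "\<bar>c4 u\<bar> \<le> norm u" using norm_fst_le'[of "snd (snd (snd u))"] n by (simp add: c4_def)
  show "\<bar>c5 u\<bar> \<le> norm u" using norm_fst_le'[of "snd (snd (snd (snd u)))"] n by (simp add: c5_def)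
  show "\<bar>c6 u\<bar> \<le> norm u" using norm_fst_le'[of "snd (snd (snd (snd (snd u))))"] n by (simp add: c6_def)
  show "\<bar>c7 u\<bar> \<le> norm u" using n by (simp add: c7_def)
qed

lemma cs_diff: "c1 (u - v) = c1 u - c1 v" "c2 (u - v) = c2 u - c2 v" "c3 (u - v) = c3 u - c3 v"
  "c4 (u - v) = c4 u - c4 v" "c5 (u - v) = c5 u - c5 v" "c6 (u - v) = c6 u - c6 v" "c7 (u - v) = c7 u - c7 v"
  unfolding cs_def by simp_all

lemma norm_le_cs: "norm u \<le> \<bar>c1 u\<bar> + \<bar>c2 u\<bar> + \<bar>c3 u\<bar> + \<bar>c4 u\<bar> + \<bar>c5 u\<bar> + \<bar>c6 u\<bar> + \<bar>c7 u\<bar>"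
proof -
  define a b c d e f g where "a = c1 u" and "b = c2 u" and "c = c3 u" and "d = c4 u" and "e = c5 u"
    and "f = c6 u" and "g = c7 u"
  have u: "u = (a,b,c,d,e,f,g)" unfolding a_def b_def c_def d_def e_def f_def g_def cs_def by simp
  have 1: "norm (a,b,c,d,e,f,g) \<le> norm a + norm (b,c,d,e,f,g)" by (rule norm_Pair_le)
  have 2: "norm (b,c,d,e,f,g) \<le> norm b + norm (c,d,e,f,g)" by (rule norm_Pair_le)
  have 3: "norm (c,d,e,f,g) \<le> norm c + norm (d,e,f,g)" by (rule norm_Pair_le)
  have 4: "norm (d,e,f,g) \<le> norm d + norm (e,f,g)" by (rule norm_Pair_le)
  have 5: "norm (e,f,g) \<le> norm e + norm (f,g)" by (rule norm_Pair_le)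
  have 6: "norm (f,g) \<le> norm f + norm g" by (rule norm_Pair_le)
  have "norm u \<le> norm a + norm b + norm c + norm d + norm e + norm f + norm g"
    unfolding u using 1 2 3 4 5 6 by linarith
  then show ?thesis unfolding a_def b_def c_def d_def e_def f_def g_def real_norm_def .
qed

lemma mul_diff:
  fixes a b c e :: real
  assumes "\<bar>a\<bar> \<le> A" "\<bar>c\<bar> \<le> A" "\<bar>b\<bar> \<le> B" "\<bar>e\<bar> \<le> B" "\<bar>a - c\<bar> \<le> d1" "\<bar>b - e\<bar> \<le> d2"
  shows "\<bar>a * b - c * e\<bar> \<le> A * d2 + B * d1"
proof -
  have "a * b - c * e = a * (b - e) + (a - c) * e" by algebra
  then have "\<bar>a * b - c * e\<bar> \<le> \<bar>a\<bar> * \<bar>b - e\<bar> + \<bar>a - c\<bar> * \<bar>e\<bar>"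
    by (metis abs_mult abs_triangle_ineq)
  also have "\<dots> \<le> A * d2 + d1 * B"
  proof (rule add_mono)
    show "\<bar>a\<bar> * \<bar>b - e\<bar> \<le> A * d2" using assms(1,6) by (intro mult_mono) auto
    show "\<bar>a - c\<bar> * \<bar>e\<bar> \<le> d1 * B" using assms(4,5) by (intro mult_mono) auto
  qed
  finally show ?thesis by (simp add: mult.commute)
qed

lemma Fs_lip:
  assumes u: "norm u \<le> \<rho>" and v: "norm v \<le> \<rho>"
  shows "norm (Fs lam u - Fs lam v) \<le> (45 * \<rho>) * norm (u - v)"
proof -
  define d where "d = norm (u - v)"
  have bu: "\<bar>c1 u\<bar> \<le> \<rho>" "\<bar>c2 u\<bar> \<le> \<rho>" "\<bar>c3 u\<bar> \<le> \<rho>" "\<bar>c4 u\<bar> \<le> \<rho>" "\<bar>c5 u\<bar> \<le> \<rho>" "\<bar>c6 u\<bar> \<le> \<rho>" "\<bar>c7 u\<bar> \<le> \<rho>"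
    using cs_le[of u] u by (meson order_trans)+
  have bv: "\<bar>c1 v\<bar> \<le> \<rho>" "\<bar>c2 v\<bar> \<le> \<rho>" "\<bar>c3 v\<bar> \<le> \<rho>" "\<bar>c4 v\<bar> \<le> \<rho>" "\<bar>c5 v\<bar> \<le> \<rho>" "\<bar>c6 v\<bar> \<le> \<rho>" "\<bar>c7 v\<bar> \<le> \<rho>"
    using cs_le[of v] v by (meson order_trans)+
  have bd: "\<bar>c1 u - c1 v\<bar> \<le> d" "\<bar>c2 u - c2 v\<bar> \<le> d" "\<bar>c3 u - c3 v\<bar> \<le> d" "\<bar>c4 u - c4 v\<bar> \<le> d"
    "\<bar>c5 u - c5 v\<bar> \<le> d" "\<bar>c6 u - c6 v\<bar> \<le> d" "\<bar>c7 u - c7 v\<bar> \<le> d"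
    using cs_le[of "u - v"] unfolding d_def cs_diff by auto
  have sq: "\<bar>a^2 - c^2\<bar> \<le> 2 * \<rho> * d" if "\<bar>a\<bar> \<le> \<rho>" "\<bar>c\<bar> \<le> \<rho>" "\<bar>a - c\<bar> \<le> d" for a c :: real
    using mul_diff[OF that(1,2,1,2,3,3)] unfolding power2_eq_square by linarith
  have sq2: "\<bar>(a - b)^2 - (c - e)^2\<bar> \<le> 8 * \<rho> * d"
    if "\<bar>a\<bar> \<le> \<rho>" "\<bar>c\<bar> \<le> \<rho>" "\<bar>a - c\<bar> \<le> d" "\<bar>b\<bar> \<le> \<rho>" "\<bar>e\<bar> \<le> \<rho>" "\<bar>b - e\<bar> \<le> d" for a b c e :: real
  proof -
    have "\<bar>a - b\<bar> \<le> 2*\<rho>" "\<bar>c - e\<bar> \<le> 2*\<rho>" "\<bar>(a - b) - (c - e)\<bar> \<le> 2*d"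
      using that unfolding abs_le_iff by linarith+
    from mul_diff[OF this(1,2,1,2,3,3)] show ?thesis unfolding power2_eq_square by linarith
  qed
  have m1: "\<bar>a * b - c * e\<bar> \<le> 2 * \<rho> * d"
    if "\<bar>a\<bar> \<le> \<rho>" "\<bar>c\<bar> \<le> \<rho>" "\<bar>a - c\<bar> \<le> d" "\<bar>b\<bar> \<le> \<rho>" "\<bar>e\<bar> \<le> \<rho>" "\<bar>b - e\<bar> \<le> d" for a b c e :: real
    using mul_diff[OF that(1,2,4,5,3,6)] by linarith
  have m3: "\<bar>a * (b1 - b2 - b3) - c * (e1 - e2 - e3)\<bar> \<le> 6 * \<rho> * d"
    if "\<bar>a\<bar> \<le> \<rho>" "\<bar>c\<bar> \<le> \<rho>" "\<bar>a - c\<bar> \<le> d" "\<bar>b1\<bar> \<le> \<rho>" "\<bar>e1\<bar> \<le> \<rho>" "\<bar>b1 - e1\<bar> \<le> d"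
       "\<bar>b2\<bar> \<le> \<rho>" "\<bar>e2\<bar> \<le> \<rho>" "\<bar>b2 - e2\<bar> \<le> d" "\<bar>b3\<bar> \<le> \<rho>" "\<bar>e3\<bar> \<le> \<rho>" "\<bar>b3 - e3\<bar> \<le> d"
    for a b1 b2 b3 c e1 e2 e3 :: real
  proof -
    have "\<bar>b1 - b2 - b3\<bar> \<le> 3*\<rho>" using that(4,7,10) unfolding abs_le_iff by linarith
    have "\<bar>e1 - e2 - e3\<bar> \<le> 3*\<rho>" using that(5,8,11) unfolding abs_le_iff by linarith
    have "\<bar>(b1 - b2 - b3) - (e1 - e2 - e3)\<bar> \<le> 3*d" using that(6,9,12) unfolding abs_le_iff by linarith
    from mul_diff[OF that(1,2) \<open>\<bar>b1 - b2 - b3\<bar> \<le> 3*\<rho>\<close> \<open>\<bar>e1 - e2 - e3\<bar> \<le> 3*\<rho>\<close> that(3) this] show ?thesis by linarith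
  qed
  have k1: "\<bar>c1 (Fs lam u - Fs lam v)\<bar> \<le> 6 * \<rho> * d"
  proof -
    have "\<bar>(c2 u)^2 - (c2 v)^2\<bar> \<le> 2 * \<rho> * d" "\<bar>(c3 u)^2 - (c3 v)^2\<bar> \<le> 2 * \<rho> * d"
      "\<bar>(c4 u)^2 - (c4 v)^2\<bar> \<le> 2 * \<rho> * d" using sq bu bv bd by blast+
    then show ?thesis unfolding cs_diff Fs_cs abs_le_iff by linarith
  qed
  have kL: "\<bar>(- x * l + r^2/2 - (s - w)^2/2 - lam) - (- x' * l' + r'^2/2 - (s' - w')^2/2 - lam)\<bar> \<le> 7 * \<rho> * d"
    if "\<bar>x\<bar> \<le> \<rho>" "\<bar>x'\<bar> \<le> \<rho>" "\<bar>x - x'\<bar> \<le> d" "\<bar>l\<bar> \<le> \<rho>" "\<bar>l'\<bar> \<le> \<rho>" "\<bar>l - l'\<bar> \<le> d"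
       "\<bar>r\<bar> \<le> \<rho>" "\<bar>r'\<bar> \<le> \<rho>" "\<bar>r - r'\<bar> \<le> d" "\<bar>s\<bar> \<le> \<rho>" "\<bar>s'\<bar> \<le> \<rho>" "\<bar>s - s'\<bar> \<le> d"
       "\<bar>w\<bar> \<le> \<rho>" "\<bar>w'\<bar> \<le> \<rho>" "\<bar>w - w'\<bar> \<le> d"
    for x l r s w x' l' r' s' w' :: real
  proof -
    have "\<bar>x * l - x' * l'\<bar> \<le> 2 * \<rho> * d" using m1 that by blast
    moreover have "\<bar>r^2 - r'^2\<bar> \<le> 2 * \<rho> * d" using sq that by blast
    moreover have "\<bar>(s - w)^2 - (s' - w')^2\<bar> \<le> 8 * \<rho> * d" using sq2 that by blast
    ultimately show ?thesis unfolding abs_le_iff by linarith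
  qed
  have k2: "\<bar>c2 (Fs lam u - Fs lam v)\<bar> \<le> 7 * \<rho> * d"
    using kL[OF bu(1) bv(1) bd(1) bu(2) bv(2) bd(2) bu(5) bv(5) bd(5) bu(6) bv(6) bd(6) bu(7) bv(7) bd(7)] by (simp only: cs_diff Fs_cs)
  have k3: "\<bar>c3 (Fs lam u - Fs lam v)\<bar> \<le> 7 * \<rho> * d"
    using kL[OF bu(1) bv(1) bd(1) bu(3) bv(3) bd(3) bu(6) bv(6) bd(6) bu(7) bv(7) bd(7) bu(5) bv(5) bd(5)] by (simp only: cs_diff Fs_cs)
  have k4: "\<bar>c4 (Fs lam u - Fs lam v)\<bar> \<le> 7 * \<rho> * d"
    using kL[OF bu(1) bv(1) bd(1) bu(4) bv(4) bd(4) bu(7) bv(7) bd(7) bu(5) bv(5) bd(5) bu(6) bv(6) bd(6)] by (simp only: cs_diff Fs_cs)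
  have k5: "\<bar>c5 (Fs lam u - Fs lam v)\<bar> \<le> 6 * \<rho> * d"
    using m3[OF bu(5) bv(5) bd(5) bu(2) bv(2) bd(2) bu(3) bv(3) bd(3) bu(4) bv(4) bd(4)] by (simp only: cs_diff Fs_cs)
  have k6: "\<bar>c6 (Fs lam u - Fs lam v)\<bar> \<le> 6 * \<rho> * d"
    using m3[OF bu(6) bv(6) bd(6) bu(3) bv(3) bd(3) bu(4) bv(4) bd(4) bu(2) bv(2) bd(2)] by (simp only: cs_diff Fs_cs)
  have k7: "\<bar>c7 (Fs lam u - Fs lam v)\<bar> \<le> 6 * \<rho> * d"
    using m3[OF bu(7) bv(7) bd(7) bu(4) bv(4) bd(4) bu(2) bv(2) bd(2) bu(3) bv(3) bd(3)] by (simp only: cs_diff Fs_cs)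
  have "norm (Fs lam u - Fs lam v) \<le> 45 * \<rho> * d"
    using norm_le_cs[of "Fs lam u - Fs lam v"] k1 k2 k3 k4 k5 k6 k7 by linarith
  then show ?thesis unfolding d_def by simp
qed

lemma Fs_cont: "continuous_on UNIV (Fs lam)"
  unfolding Fs_def cs_def by (intro continuous_intros) auto

lemma cs_bl: "bounded_linear c1" "bounded_linear c2" "bounded_linear c3" "bounded_linear c4"
  "bounded_linear c5" "bounded_linear c6" "bounded_linear c7"
  unfolding cs_def[abs_def]
  by (intro bounded_linear_fst_comp bounded_linear_snd_comp bounded_linear_fst bounded_linear_snd)+

theorem proposition3p3:
  fixes lam T S :: real and xi L1 L2 L3 R1 R2 R3 :: "real \<Rightarrow> real"
  assumes "lam \<ge> 0"
    and "T < S"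
    and "sol_on lam {T..<S} xi L1 L2 L3 R1 R2 R3"
    and "\<not> extendable_past lam T S xi L1 L2 L3 R1 R2 R3"
  shows "filterlim xi at_bot (at_left S)"
proof (rule ccontr)
  assume nf: "\<not> filterlim xi at_bot (at_left S)"
  note lam = assms(1) and TS = assms(2)
  let ?I = "{T..<S}"
  have dxi: "\<And>t. t \<in> ?I \<Longrightarrow> (xi has_real_derivative (- ((L1 t)^2) - (L2 t)^2 - (L3 t)^2 - lam)) (at t within ?I)"
   and dL1: "\<And>t. t \<in> ?I \<Longrightarrow> (L1 has_real_derivative (- xi t * L1 t + (R1 t)^2 / 2 - (R2 t - R3 t)^2 / 2 - lam)) (at t within ?I)"
   and dL2: "\<And>t. t \<in> ?I \<Longrightarrow> (L2 has_real_derivative (- xi t * L2 t + (R2 t)^2 / 2 - (R3 t - R1 t)^2 / 2 - lam)) (at t within ?I)"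
   and dL3: "\<And>t. t \<in> ?I \<Longrightarrow> (L3 has_real_derivative (- xi t * L3 t + (R3 t)^2 / 2 - (R1 t - R2 t)^2 / 2 - lam)) (at t within ?I)"
   and dR1: "\<And>t. t \<in> ?I \<Longrightarrow> (R1 has_real_derivative (R1 t * (L1 t - L2 t - L3 t))) (at t within ?I)"
   and dR2: "\<And>t. t \<in> ?I \<Longrightarrow> (R2 has_real_derivative (R2 t * (L2 t - L3 t - L1 t))) (at t within ?I)"
   and dR3: "\<And>t. t \<in> ?I \<Longrightarrow> (R3 has_real_derivative (R3 t * (L3 t - L1 t - L2 t))) (at t within ?I)"
    using assms(3) unfolding sol_on_def by blast+
  have xi_mono: "xi b \<le> xi a" if "T \<le> a" "a \<le> b" "b < S" for a b
  proof (rule antitone_deriv[OF dxi _ that])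
    fix t :: real
    show "- ((L1 t)^2) - (L2 t)^2 - (L3 t)^2 - lam \<le> 0"
      using lam zero_le_power2[of "L1 t"] zero_le_power2[of "L2 t"] zero_le_power2[of "L3 t"] by linarith
  qed
  obtain Z where Z: "\<not> (\<forall>\<^sub>F x in at_left S. xi x \<le> Z)"
    using nf unfolding filterlim_at_bot by blast
  have lb: "Z \<le> xi t" if t: "t \<in> ?I" for t
  proof (rule ccontr)
    assume "\<not> Z \<le> xi t"
    have "\<forall>\<^sub>F x in at_left S. xi x \<le> Z"
    proof (rule eventually_mono[OF eventually_at_left_real[of t S]])
      show "t < S" using t by auto
      fix x assume "x \<in> {t<..<S}"
      then have "xi x \<le> xi t" using t by (intro xi_mono) auto
      then show "xi x \<le> Z" using \<open>\<not> Z \<le> xi t\<close> by linarith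
    qed
    with Z show False by blast
  qed
  have ub: "xi t \<le> xi T" if t: "t \<in> ?I" for t using xi_mono[of T t] t by auto
  define X where "X = max \<bar>Z\<bar> \<bar>xi T\<bar>"
  have X: "\<bar>xi t\<bar> \<le> X" if "t \<in> ?I" for t using lb[OF that] ub[OF that] unfolding X_def by linarith
  have X0: "X \<ge> 0" unfolding X_def by simp
  have sq3': "3 * (- ((L1 t)^2) - (L2 t)^2 - (L3 t)^2 - lam) \<le> - ((x - y - z)^2)"
    if "x^2 + y^2 + z^2 = (L1 t)^2 + (L2 t)^2 + (L3 t)^2" for t x y z :: real
  proof -
    have "(x - y - z)^2 \<le> 3 * ((L1 t)^2 + (L2 t)^2 + (L3 t)^2)" using sq3[of x y z] that by simp
    then show ?thesis using lam by (simp add: algebra_simps)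
  qed
  have "\<exists>C. \<forall>t\<in>?I. \<bar>R1 t\<bar> \<le> C"
  proof (rule R_bound[where p = "\<lambda>t. L1 t - L2 t - L3 t", OF dR1 dxi _ lb])
    fix t assume "t \<in> ?I"
    show "3 * (- ((L1 t)^2) - (L2 t)^2 - (L3 t)^2 - lam) \<le> - ((L1 t - L2 t - L3 t)^2)"
      by (rule sq3') (simp add: algebra_simps)
  qed
  then obtain CR1 where CR1: "\<forall>t\<in>?I. \<bar>R1 t\<bar> \<le> CR1" by blast
  have "\<exists>C. \<forall>t\<in>?I. \<bar>R2 t\<bar> \<le> C"
  proof (rule R_bound[where p = "\<lambda>t. L2 t - L3 t - L1 t", OF dR2 dxi _ lb])
    fix t assume "t \<in> ?I"
    show "3 * (- ((L1 t)^2) - (L2 t)^2 - (L3 t)^2 - lam) \<le> - ((L2 t - L3 t - L1 t)^2)"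
      by (rule sq3') (simp add: algebra_simps)
  qed
  then obtain CR2 where CR2: "\<forall>t\<in>?I. \<bar>R2 t\<bar> \<le> CR2" by blast
  have "\<exists>C. \<forall>t\<in>?I. \<bar>R3 t\<bar> \<le> C"
  proof (rule R_bound[where p = "\<lambda>t. L3 t - L1 t - L2 t", OF dR3 dxi _ lb])
    fix t assume "t \<in> ?I"
    show "3 * (- ((L1 t)^2) - (L2 t)^2 - (L3 t)^2 - lam) \<le> - ((L3 t - L1 t - L2 t)^2)"
      by (rule sq3') (simp add: algebra_simps)
  qed
  then obtain CR3 where CR3: "\<forall>t\<in>?I. \<bar>R3 t\<bar> \<le> CR3" by blast
  define CR where "CR = max CR1 (max CR2 CR3)"
  have CR: "\<bar>R1 t\<bar> \<le> CR" "\<bar>R2 t\<bar> \<le> CR" "\<bar>R3 t\<bar> \<le> CR" if "t \<in> ?I" for t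
    using CR1 CR2 CR3 that unfolding CR_def by fastforce+
  obtain CL1 where CL1: "\<forall>t\<in>?I. \<bar>L1 t\<bar> \<le> CL1"
    using L_bound[OF dL1 _ X _ X0, where q = "\<lambda>t. (R1 t)^2 / 2 - (R2 t - R3 t)^2 / 2 - lam" and Q = "3 * CR^2 + lam"]
      qbound[OF CR(1) CR(2) CR(3) lam] by force
  obtain CL2 where CL2: "\<forall>t\<in>?I. \<bar>L2 t\<bar> \<le> CL2"
    using L_bound[OF dL2 _ X _ X0, where q = "\<lambda>t. (R2 t)^2 / 2 - (R3 t - R1 t)^2 / 2 - lam" and Q = "3 * CR^2 + lam"]
      qbound[OF CR(2) CR(3) CR(1) lam] by force
  obtain CL3 where CL3: "\<forall>t\<in>?I. \<bar>L3 t\<bar> \<le> CL3"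
    using L_bound[OF dL3 _ X _ X0, where q = "\<lambda>t. (R3 t)^2 / 2 - (R1 t - R2 t)^2 / 2 - lam" and Q = "3 * CR^2 + lam"]
      qbound[OF CR(3) CR(1) CR(2) lam] by force
  define Bd where "Bd = max X (max CR (max CL1 (max CL2 CL3)))"
  define Y where "Y t = (xi t, L1 t, L2 t, L3 t, R1 t, R2 t, R3 t)" for t
  have Ycs: "c1 (Y t) = xi t" "c2 (Y t) = L1 t" "c3 (Y t) = L2 t" "c4 (Y t) = L3 t"
    "c5 (Y t) = R1 t" "c6 (Y t) = R2 t" "c7 (Y t) = R3 t" for t
    unfolding Y_def cs_def by simp_all
  have Bd0: "Bd \<ge> 0" unfolding Bd_def using X0 by simp
  have BdX: "X \<le> Bd" "CR \<le> Bd" "CL1 \<le> Bd" "CL2 \<le> Bd" "CL3 \<le> Bd" unfolding Bd_def by simp_all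
  have Yb: "norm (Y t) \<le> 7 * Bd" if t: "t \<in> ?I" for t
  proof -
    have "\<bar>xi t\<bar> \<le> Bd" "\<bar>L1 t\<bar> \<le> Bd" "\<bar>L2 t\<bar> \<le> Bd" "\<bar>L3 t\<bar> \<le> Bd"
      "\<bar>R1 t\<bar> \<le> Bd" "\<bar>R2 t\<bar> \<le> Bd" "\<bar>R3 t\<bar> \<le> Bd"
      using order_trans[OF X[OF t] BdX(1)] order_trans[OF CR(1)[OF t] BdX(2)]
        order_trans[OF CR(2)[OF t] BdX(2)] order_trans[OF CR(3)[OF t] BdX(2)]
        order_trans[OF bspec[OF CL1 t] BdX(3)] order_trans[OF bspec[OF CL2 t] BdX(4)]
        order_trans[OF bspec[OF CL3 t] BdX(5)] by auto
    then show ?thesis using norm_le_cs[of "Y t"] unfolding Ycs by linarith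
  qed
  define M where "M = norm (Fs lam 0) + 45 * (7 * Bd) * (7 * Bd)"
  have FYb: "norm (Fs lam (Y t)) \<le> M" if t: "t \<in> ?I" for t
  proof -
    have "norm (Fs lam (Y t) - Fs lam 0) \<le> 45 * (7 * Bd) * norm (Y t - 0)"
      using Yb[OF t] Bd0 by (intro Fs_lip) auto
    also have "\<dots> \<le> 45 * (7 * Bd) * (7 * Bd)" using Yb[OF t] Bd0 by (intro mult_left_mono) auto
    finally show ?thesis unfolding M_def using norm_triangle_ineq2[of "Fs lam (Y t)" "Fs lam 0"] by linarith
  qed
  define CS where "CS = {c1, c2, c3, c4, c5, c6, c7}"
  have CSbl: "bounded_linear c" if "c \<in> CS" for c using that cs_bl unfolding CS_def by auto
  have CSle: "\<bar>c u\<bar> \<le> norm u" if "c \<in> CS" for c u using that cs_le[of u] unfolding CS_def by auto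
  have dY: "((\<lambda>t. c (Y t)) has_real_derivative c (Fs lam (Y t))) (at t within ?I)" if "c \<in> CS" "t \<in> ?I" for c t
    using that(1) unfolding CS_def
    using dxi[OF that(2)] dL1[OF that(2)] dL2[OF that(2)] dL3[OF that(2)] dR1[OF that(2)] dR2[OF that(2)] dR3[OF that(2)]
    by (auto simp only: Fs_cs Ycs insert_iff empty_iff)
  have lim: "\<exists>l. ((\<lambda>t. c (Y t)) \<longlongrightarrow> l) (at_left S)" if "c \<in> CS" for c
  proof (rule limit_bounded_deriv[OF dY[OF that] _ TS])
    fix t assume "t \<in> ?I"
    then show "\<bar>c (Fs lam (Y t))\<bar> \<le> M" using CSle[OF that] FYb by (meson order_trans)
  qed
  have "c1 \<in> CS" "c2 \<in> CS" "c3 \<in> CS" "c4 \<in> CS" "c5 \<in> CS" "c6 \<in> CS" "c7 \<in> CS" unfolding CS_def by auto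
  then obtain a1 a2 a3 a4 a5 a6 a7 where a: "((\<lambda>t. c1 (Y t)) \<longlongrightarrow> a1) (at_left S)"
    "((\<lambda>t. c2 (Y t)) \<longlongrightarrow> a2) (at_left S)" "((\<lambda>t. c3 (Y t)) \<longlongrightarrow> a3) (at_left S)"
    "((\<lambda>t. c4 (Y t)) \<longlongrightarrow> a4) (at_left S)" "((\<lambda>t. c5 (Y t)) \<longlongrightarrow> a5) (at_left S)"
    "((\<lambda>t. c6 (Y t)) \<longlongrightarrow> a6) (at_left S)" "((\<lambda>t. c7 (Y t)) \<longlongrightarrow> a7) (at_left S)"
    using lim by meson
  define y0 where "y0 = (a1, a2, a3, a4, a5, a6, a7)"
  have Ylim: "(Y \<longlongrightarrow> y0) (at_left S)"
  proof -
    have "((\<lambda>t. (c1 (Y t), c2 (Y t), c3 (Y t), c4 (Y t), c5 (Y t), c6 (Y t), c7 (Y t))) \<longlongrightarrow> y0) (at_left S)"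
      unfolding y0_def by (intro tendsto_Pair a)
    moreover have "(\<lambda>t. (c1 (Y t), c2 (Y t), c3 (Y t), c4 (Y t), c5 (Y t), c6 (Y t), c7 (Y t))) = Y"
      by (rule ext) (simp add: cs_def)
    ultimately show ?thesis by simp
  qed
  have FYlim: "((\<lambda>t. Fs lam (Y t)) \<longlongrightarrow> Fs lam y0) (at_left S)"
    by (rule isCont_tendsto_compose[OF _ Ylim]) (use Fs_cont[of lam] continuous_on_eq_continuous_at in blast)
  obtain e y where e: "e > 0" and yS: "y S = y0"
    and dy: "\<forall>t\<in>{S..S+e}. (y has_vector_derivative Fs lam (y t)) (at t within {S..S+e})"
  proof -
    have "\<exists>e>0. \<exists>y. y S = y0 \<and> (\<forall>t\<in>{S..S+e}. (y has_vector_derivative Fs lam (y t)) (at t within {S..S+e}))"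
    proof (rule ode_exists[OF Fs_cont, of 1 "45 * (norm y0 + 1)"])
      fix u v assume "u \<in> cball y0 1" "v \<in> cball y0 1"
      then have "norm u \<le> norm y0 + 1" "norm v \<le> norm y0 + 1"
        using norm_triangle_ineq2[of u y0] norm_triangle_ineq2[of v y0]
        by (auto simp: dist_norm norm_minus_commute)
      then show "norm (Fs lam u - Fs lam v) \<le> 45 * (norm y0 + 1) * norm (u - v)" by (rule Fs_lip)
    qed auto
    then show ?thesis using that by blast
  qed
  define EY where "EY t = (if t < S then Y t else y t)" for t
  have gl: "((\<lambda>t. c (EY t)) has_real_derivative c (Fs lam (EY t))) (at t within {T..<S+e})"
    if c: "c \<in> CS" and t: "t \<in> {T..<S+e}" for c t
  proof -
    interpret c: bounded_linear c using CSbl[OF c] .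
    have dz: "((\<lambda>t. c (y t)) has_real_derivative c (Fs lam (y t))) (at t within {S..S+e})"
      if "t \<in> {S..S+e}" for t
      unfolding has_real_derivative_iff_has_vector_derivative
      by (rule c.has_vector_derivative) (use dy that in blast)
    have "((\<lambda>t. if t < S then c (Y t) else c (y t)) has_real_derivative
        (if t < S then c (Fs lam (Y t)) else c (Fs lam (y t)))) (at t within {T..<S+e})"
    proof (rule glue_deriv[OF dY[OF c] dz TS e])
      show "((\<lambda>t. c (Y t)) \<longlongrightarrow> c (y S)) (at_left S)" unfolding yS by (rule c.tendsto[OF Ylim])
      show "((\<lambda>t. c (Fs lam (Y t))) \<longlongrightarrow> c (Fs lam (y S))) (at_left S)" unfolding yS by (rule c.tendsto[OF FYlim])
    qed (use t in auto)
    moreover have "(\<lambda>t. if t < S then c (Y t) else c (y t)) = (\<lambda>t. c (EY t))"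
      by (rule ext) (simp add: EY_def)
    moreover have "(if t < S then c (Fs lam (Y t)) else c (Fs lam (y t))) = c (Fs lam (EY t))"
      by (simp add: EY_def)
    ultimately show ?thesis by simp
  qed
  have sol: "sol_on lam {T..<S+e} (\<lambda>t. c1 (EY t)) (\<lambda>t. c2 (EY t)) (\<lambda>t. c3 (EY t)) (\<lambda>t. c4 (EY t))
      (\<lambda>t. c5 (EY t)) (\<lambda>t. c6 (EY t)) (\<lambda>t. c7 (EY t))"
    unfolding sol_on_def
  proof (intro ballI conjI)
    fix r assume r: "r \<in> {T..<S+e}"
    show "((\<lambda>t. c1 (EY t)) has_real_derivative - ((c2 (EY r))^2) - (c3 (EY r))^2 - (c4 (EY r))^2 - lam) (at r within {T..<S+e})"
      by (rule gl[OF _ r, of c1, unfolded Fs_cs]) (simp add: CS_def)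
    show "((\<lambda>t. c2 (EY t)) has_real_derivative - c1 (EY r) * c2 (EY r) + (c5 (EY r))^2 / 2 - (c6 (EY r) - c7 (EY r))^2 / 2 - lam) (at r within {T..<S+e})"
      by (rule gl[OF _ r, of c2, unfolded Fs_cs]) (simp add: CS_def)
    show "((\<lambda>t. c3 (EY t)) has_real_derivative - c1 (EY r) * c3 (EY r) + (c6 (EY r))^2 / 2 - (c7 (EY r) - c5 (EY r))^2 / 2 - lam) (at r within {T..<S+e})"
      by (rule gl[OF _ r, of c3, unfolded Fs_cs]) (simp add: CS_def)
    show "((\<lambda>t. c4 (EY t)) has_real_derivative - c1 (EY r) * c4 (EY r) + (c7 (EY r))^2 / 2 - (c5 (EY r) - c6 (EY r))^2 / 2 - lam) (at r within {T..<S+e})"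
      by (rule gl[OF _ r, of c4, unfolded Fs_cs]) (simp add: CS_def)
    show "((\<lambda>t. c5 (EY t)) has_real_derivative c5 (EY r) * (c2 (EY r) - c3 (EY r) - c4 (EY r))) (at r within {T..<S+e})"
      by (rule gl[OF _ r, of c5, unfolded Fs_cs]) (simp add: CS_def)
    show "((\<lambda>t. c6 (EY t)) has_real_derivative c6 (EY r) * (c3 (EY r) - c4 (EY r) - c2 (EY r))) (at r within {T..<S+e})"
      by (rule gl[OF _ r, of c6, unfolded Fs_cs]) (simp add: CS_def)
    show "((\<lambda>t. c7 (EY t)) has_real_derivative c7 (EY r) * (c4 (EY r) - c2 (EY r) - c3 (EY r))) (at r within {T..<S+e})"
      by (rule gl[OF _ r, of c7, unfolded Fs_cs]) (simp add: CS_def)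
  qed
  have agr: "\<forall>r\<in>{T..<S}. c1 (EY r) = xi r \<and> c2 (EY r) = L1 r \<and> c3 (EY r) = L2 r \<and> c4 (EY r) = L3 r \<and>
      c5 (EY r) = R1 r \<and> c6 (EY r) = R2 r \<and> c7 (EY r) = R3 r"
    by (simp add: EY_def Ycs)
  have "\<exists>xi' L1' L2' L3' R1' R2' R3'. sol_on lam {T..<S+e} xi' L1' L2' L3' R1' R2' R3' \<and>
       (\<forall>r\<in>{T..<S}. xi' r = xi r \<and> L1' r = L1 r \<and> L2' r = L2 r \<and> L3' r = L3 r \<and>
                      R1' r = R1 r \<and> R2' r = R2 r \<and> R3' r = R3 r)"
    by (rule exI[of _ "\<lambda>t. c1 (EY t)"], rule exI[of _ "\<lambda>t. c2 (EY t)"],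
        rule exI[of _ "\<lambda>t. c3 (EY t)"], rule exI[of _ "\<lambda>t. c4 (EY t)"], rule exI[of _ "\<lambda>t. c5 (EY t)"],
        rule exI[of _ "\<lambda>t. c6 (EY t)"], rule exI[of _ "\<lambda>t. c7 (EY t)"], rule conjI[OF sol agr])
  then have "extendable_past lam T S xi L1 L2 L3 R1 R2 R3"
    unfolding extendable_past_def using e by (intro exI[of _ "S+e"] conjI) auto
  with assms(4) show False by blast
qed

end
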